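(* The graphs $\mathcal{F}_1$, $\mathcal{F}_2$ and $\mathcal{F}_3$ are non-Mengerian.
   Context: Graphs are finite, loopless, and may have parallel edges. A temporal graph is a pair $(G,\lambda)$ with $\lambda:E(G)\to\mathbb{Z}_{>0}$. A temporal $s,t$-path is an $s,t$-path $(s=v_1,e_1,\dots,e_{k-1},v_k=t)$ of $G$ (no repeated vertices) with $\lambda(e_1)\le\dots\le\lambda(e_{k-1})$. Two temporal $s,t$-paths are disjoint if they share no vertex other than $s,t$. For distinct non-adjacent $s,t$, a temporal $s,t$-vertex cut is a set $S\subseteq V(G)\setminus\{s,t\}$ such that $G-S$ (with $\lambda$ restricted) has no temporal $s,t$-path. $p_{G,\lambda}(s,t)$ is the maximum number of pairwise disjoint temporal $s,t$-paths and $c_{G,\lambda}(s,t)$ the minimum size of a temporal $s,t$-vertex cut. $G$ is Mengerian if $p_{G,\lambda}(s,t)=c_{G,\lambda}(s,t)$ for every $\lambda$ and every pair of distinct non-adjacent $s,t\in V(G)$. $\mathcal{F}_3$ is the gem: the simple graph on vertices $s,u,v,t,x$ with edges $su,uv,vt,xs,xu,xv,xt$. $\mathcal{F}_1$ is the graph on vertices $s,u,v,t,w,w'$ with simple edges $su,uv,vt,sw,wt,uw',w'v$ and exactly two parallel edges between $w$ and $w'$. $\mathcal{F}_2$ is the graph on vertices $s,u,v,t,w,w'$ with simple edges $su,uv,vt,sw,uw,w'v,w't$ and exactly two parallel edges between $w$ and $w'$. *)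

theory Defs
  imports Main
begin

text \<open>A finite loopless multigraph is given by a vertex set V, an edge set E
  (edges are abstract identifiers, so parallel edges are allowed) and a function
  ends assigning to each edge its two-element set of endpoints.\<close>

definition adjacent :: "'e set \<Rightarrow> ('e \<Rightarrow> 'v set) \<Rightarrow> 'v \<Rightarrow> 'v \<Rightarrow> bool" where
  "adjacent E ends s t \<longleftrightarrow> (\<exists>e\<in>E. ends e = {s, t})"

definition temporal_path ::
  "'v set \<Rightarrow> 'e set \<Rightarrow> ('e \<Rightarrow> 'v set) \<Rightarrow> ('e \<Rightarrow> nat) \<Rightarrow> 'v \<Rightarrow> 'v \<Rightarrow> 'v list \<Rightarrow> 'e list \<Rightarrow> bool" where
  "temporal_path V E ends lam s t vs es \<longleftrightarrow>
     vs \<noteq> [] \<and> length vs = length es + 1 \<and> distinct vs \<and> set vs \<subseteq> V \<and>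
     hd vs = s \<and> last vs = t \<and> set es \<subseteq> E \<and>
     (\<forall>i<length es. ends (es ! i) = {vs ! i, vs ! Suc i}) \<and>
     sorted (map lam es)"

definition temporal_paths ::
  "'v set \<Rightarrow> 'e set \<Rightarrow> ('e \<Rightarrow> 'v set) \<Rightarrow> ('e \<Rightarrow> nat) \<Rightarrow> 'v \<Rightarrow> 'v \<Rightarrow> ('v list \<times> 'e list) set" where
  "temporal_paths V E ends lam s t = {(vs, es). temporal_path V E ends lam s t vs es}"

definition p_temporal ::
  "'v set \<Rightarrow> 'e set \<Rightarrow> ('e \<Rightarrow> 'v set) \<Rightarrow> ('e \<Rightarrow> nat) \<Rightarrow> 'v \<Rightarrow> 'v \<Rightarrow> nat" where
  "p_temporal V E ends lam s t = Max {card P | P.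
     P \<subseteq> temporal_paths V E ends lam s t \<and>
     (\<forall>a\<in>P. \<forall>b\<in>P. a \<noteq> b \<longrightarrow> set (fst a) \<inter> set (fst b) \<subseteq> {s, t})}"

definition temporal_cut ::
  "'v set \<Rightarrow> 'e set \<Rightarrow> ('e \<Rightarrow> 'v set) \<Rightarrow> ('e \<Rightarrow> nat) \<Rightarrow> 'v \<Rightarrow> 'v \<Rightarrow> 'v set \<Rightarrow> bool" where
  "temporal_cut V E ends lam s t S \<longleftrightarrow> S \<subseteq> V - {s, t} \<and>
     (\<forall>(vs, es) \<in> temporal_paths V E ends lam s t. set vs \<inter> S \<noteq> {})"

definition c_temporal ::
  "'v set \<Rightarrow> 'e set \<Rightarrow> ('e \<Rightarrow> 'v set) \<Rightarrow> ('e \<Rightarrow> nat) \<Rightarrow> 'v \<Rightarrow> 'v \<Rightarrow> nat" where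
  "c_temporal V E ends lam s t = Min {card S | S. temporal_cut V E ends lam s t S}"

definition mengerian :: "'v set \<Rightarrow> 'e set \<Rightarrow> ('e \<Rightarrow> 'v set) \<Rightarrow> bool" where
  "mengerian V E ends \<longleftrightarrow>
     (\<forall>lam :: 'e \<Rightarrow> nat. (\<forall>e\<in>E. 0 < lam e) \<longrightarrow>
        (\<forall>s\<in>V. \<forall>t\<in>V. s \<noteq> t \<and> \<not> adjacent E ends s t \<longrightarrow>
           p_temporal V E ends lam s t = c_temporal V E ends lam s t))"

definition ends_of :: "(string \<times> string) list \<Rightarrow> nat \<Rightarrow> string set" where
  "ends_of L e = {fst (L ! e), snd (L ! e)}"

definition F1_list :: "(string \<times> string) list" where
  "F1_list = [(''s'',''u''), (''u'',''v''), (''v'',''t''), (''s'',''w''), (''w'',''t''),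
              (''u'',''w2''), (''w2'',''v''), (''w'',''w2''), (''w'',''w2'')]"

definition F2_list :: "(string \<times> string) list" where
  "F2_list = [(''s'',''u''), (''u'',''v''), (''v'',''t''), (''s'',''w''), (''u'',''w''),
              (''w2'',''v''), (''w2'',''t''), (''w'',''w2''), (''w'',''w2'')]"

definition F3_list :: "(string \<times> string) list" where
  "F3_list = [(''s'',''u''), (''u'',''v''), (''v'',''t''), (''x'',''s''), (''x'',''u''),
              (''x'',''v''), (''x'',''t'')]"

definition F12_vertices :: "string set" where
  "F12_vertices = {''s'', ''u'', ''v'', ''t'', ''w'', ''w2''}"

definition F3_vertices :: "string set" where
  "F3_vertices = {''s'', ''u'', ''v'', ''t'', ''x''}"

end

theory Submission
  imports Defs
begin

fun pf :: "(string \<times> string) list \<Rightarrow> (nat \<Rightarrow> nat) \<Rightarrow> string \<Rightarrow> nat \<Rightarrow> nat \<Rightarrow> string list \<Rightarrow> string \<Rightarrow> string list list" where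
  "pf L lam t 0 lo vis cur = (if cur = t then [[cur]] else [])"
| "pf L lam t (Suc n) lo vis cur = (if cur = t then [[cur]] else
     concat (map (\<lambda>e. if cur = fst (L!e) \<or> cur = snd (L!e) then
        (if lo \<le> lam e \<and> (if fst (L!e) = cur then snd (L!e) else fst (L!e)) \<notin> set (cur#vis)
         then map ((#) cur) (pf L lam t n (lam e) (cur#vis) (if fst (L!e) = cur then snd (L!e) else fst (L!e)))
         else []) else []) [0..<length L]))"

lemma pf_complete:
  assumes "vs \<noteq> []" "length vs = length es + 1" "distinct vs" "hd vs = cur" "last vs = t"
    "set es \<subseteq> {0..<length L}" "\<forall>i<length es. ends_of L (es!i) = {vs!i, vs!Suc i}"
    "sorted (map lam es)" "\<forall>e\<in>set es. lo \<le> lam e" "length vs \<le> Suc n" "set vis \<inter> set vs = {}"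
  shows "vs \<in> set (pf L lam t n lo vis cur)"
  using assms
proof (induction vs arbitrary: es cur lo vis n)
  case Nil
  then show ?case by simp
next
  case (Cons v vs)
  show ?case
  proof (cases vs)
    case Nil
    then show ?thesis using Cons.prems by (cases n) auto
  next
    case (Cons w rest)
    note vsw = Cons
    from Cons.prems(2) vsw obtain e es' where es: "es = e # es'" by (cases es) auto
    have cv1: "cur = v" using Cons.prems(4) by simp
    have "t \<in> set vs" using Cons.prems(5) vsw by (metis last_ConsR last_in_set list.distinct(1))
    hence cv: "cur = v" "v \<noteq> t" using cv1 Cons.prems(3) by auto
    from Cons.prems(10) vsw obtain m where n: "n = Suc m" by (cases n) auto
    have ee: "ends_of L e = {v, w}" using Cons.prems(7) es vsw by (metis length_greater_0_conv list.distinct(1) nth_Cons_0 nth_Cons_Suc)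
    have vw: "v \<noteq> w" using Cons.prems(3) vsw by auto
    have inc: "v = fst (L!e) \<or> v = snd (L!e)" using ee unfolding ends_of_def by auto
    have wdef: "w = (if fst (L!e) = v then snd (L!e) else fst (L!e))"
      using ee vw unfolding ends_of_def by (auto simp: doubleton_eq_iff)
    have lo: "lo \<le> lam e" using Cons.prems(9) es by auto
    have wn: "w \<notin> set (v#vis)" using Cons.prems(3,11) vsw vw by auto
    have eL: "e \<in> set [0..<length L]" using Cons.prems(6) es by auto
    have IH: "vs \<in> set (pf L lam t m (lam e) (v#vis) w)"
    proof (rule Cons.IH[of es'])
      show "vs \<noteq> []" using vsw by simp
      show "length vs = length es' + 1" using Cons.prems(2) es by simp
      show "distinct vs" using Cons.prems(3) by simp
      show "hd vs = w" using vsw by simp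
      show "last vs = t" using Cons.prems(5) vsw by simp
      show "set es' \<subseteq> {0..<length L}" using Cons.prems(6) es by simp
      show "\<forall>i<length es'. ends_of L (es'!i) = {vs!i, vs!Suc i}"
        using Cons.prems(7) es by (metis Suc_less_eq length_Cons nth_Cons_Suc)
      show "sorted (map lam es')" using Cons.prems(8) es by simp
      show "\<forall>e'\<in>set es'. lam e \<le> lam e'" using Cons.prems(8) es by simp
      show "length vs \<le> Suc m" using Cons.prems(10) n by simp
      show "set (v#vis) \<inter> set vs = {}" using Cons.prems(3,11) by auto
    qed
    show ?thesis
      unfolding n cv(1) using cv(2) inc lo wn eL IH wdef
      by (auto intro!: bexI[of _ e])
  qed
qed

lemma tp_in_Q:
  assumes "temporal_path V {0..<length L} (ends_of L) lam s t vs es"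
    and "finite V" "card V \<le> Suc n" and Q: "set (pf L lam t n 0 [] s) \<subseteq> Q"
  shows "vs \<in> Q"
proof -
  have tp: "vs \<noteq> []" "length vs = length es + 1" "distinct vs" "set vs \<subseteq> V"
     "hd vs = s" "last vs = t" "set es \<subseteq> {0..<length L}"
     "\<forall>i<length es. ends_of L (es ! i) = {vs ! i, vs ! Suc i}" "sorted (map lam es)"
    using assms(1) unfolding temporal_path_def by auto
  have "length vs = card (set vs)" using tp(3) by (simp add: distinct_card)
  also have "\<dots> \<le> card V" using tp(4) assms(2) by (simp add: card_mono)
  finally have "length vs \<le> Suc n" using assms(3) by simp
  hence "vs \<in> set (pf L lam t n 0 [] s)"
    using tp by (intro pf_complete[of vs es]) auto
  thus ?thesis using Q by auto
qed

lemma not_meng_generic: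
  assumes fin: "finite V" "card V \<le> Suc n"
    and lam_pos: "\<forall>e\<in>{0..<length L}. 0 < lam e"
    and st: "s\<in>V" "t\<in>V" "s\<noteq>t" "\<not> adjacent {0..<length L} (ends_of L) s t"
    and Q: "set (pf L lam t n 0 [] s) \<subseteq> Q"
    and Qint: "\<forall>a\<in>Q. \<forall>b\<in>Q. \<not> set a \<inter> set b \<subseteq> {s,t}"
    and ne: "V - {s,t} \<noteq> {}"
    and avoid: "\<forall>v\<in>V-{s,t}. \<exists>vs es. temporal_path V {0..<length L} (ends_of L) lam s t vs es \<and> v \<notin> set vs"
  shows "\<not> mengerian V {0..<length L} (ends_of L)"
proof
  let ?E = "{0..<length L}" and ?en = "ends_of L"
  assume "mengerian V ?E ?en"
  hence eq: "p_temporal V ?E ?en lam s t = c_temporal V ?E ?en lam s t"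
    unfolding mengerian_def using lam_pos st by blast
  have inQ: "vs \<in> Q" if "(vs, es) \<in> temporal_paths V ?E ?en lam s t" for vs es
    using tp_in_Q[OF _ fin Q] that unfolding temporal_paths_def by auto
  let ?PS = "{card P | P. P \<subseteq> temporal_paths V ?E ?en lam s t \<and>
     (\<forall>a\<in>P. \<forall>b\<in>P. a \<noteq> b \<longrightarrow> set (fst a) \<inter> set (fst b) \<subseteq> {s, t})}"
  have PS01: "?PS \<subseteq> {0, 1}"
  proof
    fix k assume "k \<in> ?PS"
    then obtain P where k: "k = card P" and P: "P \<subseteq> temporal_paths V ?E ?en lam s t"
      "\<forall>a\<in>P. \<forall>b\<in>P. a \<noteq> b \<longrightarrow> set (fst a) \<inter> set (fst b) \<subseteq> {s, t}" by blast
    have "\<forall>a\<in>P. \<forall>b\<in>P. a = b"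
    proof (intro ballI)
      fix a b assume ab: "a \<in> P" "b \<in> P"
      have "fst a \<in> Q" "fst b \<in> Q" using ab P(1) inQ by (metis prod.collapse subsetD)+
      thus "a = b" using Qint P(2) ab by blast
    qed
    hence "card P \<le> Suc 0"
      by (cases "finite P") (auto simp: card_le_Suc0_iff_eq)
    thus "k \<in> {0,1}" using k by auto
  qed
  have "0 \<in> ?PS" by force
  have p1: "p_temporal V ?E ?en lam s t \<le> 1"
    unfolding p_temporal_def
  proof (rule Max.boundedI)
    show "finite ?PS" using \<open>?PS \<subseteq> {0,1}\<close> finite_subset by blast
    show "?PS \<noteq> {}" using \<open>0 \<in> ?PS\<close> by blast
    show "\<And>a. a \<in> ?PS \<Longrightarrow> a \<le> 1" using PS01 by fastforce
  qed
  let ?CS = "{card S | S. temporal_cut V ?E ?en lam s t S}"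
  have "?CS \<subseteq> card ` Pow V" unfolding temporal_cut_def by auto
  hence cfin: "finite ?CS" using fin(1) by (meson finite_Pow_iff finite_imageI finite_subset)
  have "temporal_cut V ?E ?en lam s t (V - {s,t})"
    unfolding temporal_cut_def
  proof (intro conjI ballI)
    fix x assume x: "x \<in> temporal_paths V ?E ?en lam s t"
    obtain vs es where x2: "x = (vs, es)" by (cases x)
    have "vs \<in> Q" using inQ x x2 by simp
    hence "\<not> set vs \<subseteq> {s,t}" using Qint by blast
    moreover have "set vs \<subseteq> V" using x x2 unfolding temporal_paths_def temporal_path_def by auto
    ultimately show "case x of (vs, es) \<Rightarrow> set vs \<inter> (V - {s, t}) \<noteq> {}" using x2 by auto
  qed auto
  hence cne: "?CS \<noteq> {}" by blast
  have "\<forall>k\<in>?CS. 2 \<le> k"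
  proof
    fix k assume "k \<in> ?CS"
    then obtain S where k: "k = card S" and S: "temporal_cut V ?E ?en lam s t S" by blast
    have SV: "S \<subseteq> V - {s,t}" and hit: "\<forall>(vs, es) \<in> temporal_paths V ?E ?en lam s t. set vs \<inter> S \<noteq> {}"
      using S unfolding temporal_cut_def by auto
    have fS: "finite S" using SV fin(1) finite_subset by blast
    show "2 \<le> k"
    proof (rule ccontr)
      assume "\<not> 2 \<le> k"
      hence "card S \<le> Suc 0" using k by simp
      hence one: "\<forall>a\<in>S. \<forall>b\<in>S. a = b" using fS card_le_Suc0_iff_eq by blast
      obtain v where v: "v \<in> V - {s,t}" "S \<subseteq> {v}"
      proof (cases "S = {}")
        case True then show ?thesis using ne that by blast
      next
        case False then obtain v where "v \<in> S" by blast
        then show ?thesis using one that SV by blast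
      qed
      obtain vs es where "temporal_path V ?E ?en lam s t vs es" "v \<notin> set vs"
        using avoid v(1) by blast
      moreover have "(vs, es) \<in> temporal_paths V ?E ?en lam s t"
        using calculation unfolding temporal_paths_def by simp
      ultimately show False using hit v(2) by blast
    qed
  qed
  hence c2: "2 \<le> c_temporal V ?E ?en lam s t"
    unfolding c_temporal_def using cfin cne by simp
  show False using p1 c2 eq by simp
qed

definition lam_f1 :: "nat \<Rightarrow> nat" where "lam_f1 e = [1, 1, 2, 2, 1, 1, 2, 1, 2] ! e"

lemma f1_tp0: "temporal_path F12_vertices {0..<length F1_list} (ends_of F1_list) lam_f1 ''s'' ''t'' [''s'',''u'',''v'',''t''] [0,1,2]"
  unfolding temporal_path_def by (simp add: F12_vertices_def F1_list_def ends_of_def lam_f1_def less_Suc_eq insert_commute)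

lemma f1_tp1: "temporal_path F12_vertices {0..<length F1_list} (ends_of F1_list) lam_f1 ''s'' ''t'' [''s'',''u'',''w2'',''v'',''t''] [0,5,6,2]"
  unfolding temporal_path_def by (simp add: F12_vertices_def F1_list_def ends_of_def lam_f1_def less_Suc_eq insert_commute)

lemma f1_tp2: "temporal_path F12_vertices {0..<length F1_list} (ends_of F1_list) lam_f1 ''s'' ''t'' [''s'',''u'',''w2'',''w'',''t''] [0,5,7,4]"
  unfolding temporal_path_def by (simp add: F12_vertices_def F1_list_def ends_of_def lam_f1_def less_Suc_eq insert_commute)

lemma f1_tp3: "temporal_path F12_vertices {0..<length F1_list} (ends_of F1_list) lam_f1 ''s'' ''t'' [''s'',''w'',''w2'',''v'',''t''] [3,8,6,2]"
  unfolding temporal_path_def by (simp add: F12_vertices_def F1_list_def ends_of_def lam_f1_def less_Suc_eq insert_commute)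

lemma f1_nm: "\<not> mengerian F12_vertices {0..<length F1_list} (ends_of F1_list)"
proof (rule not_meng_generic[where n=5 and lam=lam_f1 and s="''s''" and t="''t''" and Q="{[''s'',''u'',''v'',''t''], [''s'',''u'',''w2'',''v'',''t''], [''s'',''u'',''w2'',''w'',''t''], [''s'',''w'',''w2'',''v'',''t'']}"])
  show "finite F12_vertices" by (simp add: F12_vertices_def)
  show "card F12_vertices \<le> Suc 5" by (simp add: F12_vertices_def)
  show "\<forall>e\<in>{0..<length F1_list}. 0 < lam_f1 e"
    by (auto simp add: F1_list_def lam_f1_def less_Suc_eq numeral_eq_Suc)
  show "''s'' \<in> F12_vertices" "''t'' \<in> F12_vertices" "''s'' \<noteq> ''t''" by (simp_all add: F12_vertices_def)
  show "\<not> adjacent {0..<length F1_list} (ends_of F1_list) ''s'' ''t''"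
    by (auto simp add: adjacent_def F1_list_def ends_of_def less_Suc_eq numeral_eq_Suc doubleton_eq_iff)
  show "set (pf F1_list lam_f1 ''t'' 5 0 [] ''s'') \<subseteq> {[''s'',''u'',''v'',''t''], [''s'',''u'',''w2'',''v'',''t''], [''s'',''u'',''w2'',''w'',''t''], [''s'',''w'',''w2'',''v'',''t'']}"
    by (simp add: F1_list_def lam_f1_def upt_rec numeral_eq_Suc)
  show "\<forall>a\<in>{[''s'',''u'',''v'',''t''], [''s'',''u'',''w2'',''v'',''t''], [''s'',''u'',''w2'',''w'',''t''], [''s'',''w'',''w2'',''v'',''t'']}. \<forall>b\<in>{[''s'',''u'',''v'',''t''], [''s'',''u'',''w2'',''v'',''t''], [''s'',''u'',''w2'',''w'',''t''], [''s'',''w'',''w2'',''v'',''t'']}. \<not> set a \<inter> set b \<subseteq> {''s'',''t''}" by simp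
  show "F12_vertices - {''s'',''t''} \<noteq> {}" by (simp add: F12_vertices_def)
  show "\<forall>v\<in>F12_vertices-{''s'',''t''}. \<exists>vs es. temporal_path F12_vertices {0..<length F1_list} (ends_of F1_list) lam_f1 ''s'' ''t'' vs es \<and> v \<notin> set vs"
  proof
    fix v assume "v \<in> F12_vertices-{''s'',''t''}"
    hence "v = ''u'' \<or> v = ''v'' \<or> v = ''w'' \<or> v = ''w2''" by (auto simp: F12_vertices_def)
    moreover
{ assume "v = ''u''" hence "\<exists>vs es. temporal_path F12_vertices {0..<length F1_list} (ends_of F1_list) lam_f1 ''s'' ''t'' vs es \<and> v \<notin> set vs" using f1_tp3 by fastforce }
    moreover { assume "v = ''v''" hence "\<exists>vs es. temporal_path F12_vertices {0..<length F1_list} (ends_of F1_list) lam_f1 ''s'' ''t'' vs es \<and> v \<notin> set vs" using f1_tp2 by fastforce }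
    moreover { assume "v = ''w''" hence "\<exists>vs es. temporal_path F12_vertices {0..<length F1_list} (ends_of F1_list) lam_f1 ''s'' ''t'' vs es \<and> v \<notin> set vs" using f1_tp0 by fastforce }
    moreover { assume "v = ''w2''" hence "\<exists>vs es. temporal_path F12_vertices {0..<length F1_list} (ends_of F1_list) lam_f1 ''s'' ''t'' vs es \<and> v \<notin> set vs" using f1_tp0 by fastforce }
    ultimately show "\<exists>vs es. temporal_path F12_vertices {0..<length F1_list} (ends_of F1_list) lam_f1 ''s'' ''t'' vs es \<and> v \<notin> set vs" by blast
  qed
qed

definition lam_f2 :: "nat \<Rightarrow> nat" where "lam_f2 e = [1, 1, 2, 2, 1, 2, 1, 1, 2] ! e"

lemma f2_tp0: "temporal_path F12_vertices {0..<length F2_list} (ends_of F2_list) lam_f2 ''s'' ''t'' [''s'',''u'',''v'',''t''] [0,1,2]"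
  unfolding temporal_path_def by (simp add: F12_vertices_def F2_list_def ends_of_def lam_f2_def less_Suc_eq insert_commute)

lemma f2_tp1: "temporal_path F12_vertices {0..<length F2_list} (ends_of F2_list) lam_f2 ''s'' ''t'' [''s'',''u'',''w'',''w2'',''t''] [0,4,7,6]"
  unfolding temporal_path_def by (simp add: F12_vertices_def F2_list_def ends_of_def lam_f2_def less_Suc_eq insert_commute)

lemma f2_tp2: "temporal_path F12_vertices {0..<length F2_list} (ends_of F2_list) lam_f2 ''s'' ''t'' [''s'',''u'',''w'',''w2'',''v'',''t''] [0,4,8,5,2]"
  unfolding temporal_path_def by (simp add: F12_vertices_def F2_list_def ends_of_def lam_f2_def less_Suc_eq insert_commute)

lemma f2_tp3: "temporal_path F12_vertices {0..<length F2_list} (ends_of F2_list) lam_f2 ''s'' ''t'' [''s'',''w'',''w2'',''v'',''t''] [3,8,5,2]"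
  unfolding temporal_path_def by (simp add: F12_vertices_def F2_list_def ends_of_def lam_f2_def less_Suc_eq insert_commute)

lemma f2_nm: "\<not> mengerian F12_vertices {0..<length F2_list} (ends_of F2_list)"
proof (rule not_meng_generic[where n=5 and lam=lam_f2 and s="''s''" and t="''t''" and Q="{[''s'',''u'',''v'',''t''], [''s'',''u'',''w'',''w2'',''t''], [''s'',''u'',''w'',''w2'',''v'',''t''], [''s'',''w'',''w2'',''v'',''t'']}"])
  show "finite F12_vertices" by (simp add: F12_vertices_def)
  show "card F12_vertices \<le> Suc 5" by (simp add: F12_vertices_def)
  show "\<forall>e\<in>{0..<length F2_list}. 0 < lam_f2 e"
    by (auto simp add: F2_list_def lam_f2_def less_Suc_eq numeral_eq_Suc)
  show "''s'' \<in> F12_vertices" "''t'' \<in> F12_vertices" "''s'' \<noteq> ''t''" by (simp_all add: F12_vertices_def)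
  show "\<not> adjacent {0..<length F2_list} (ends_of F2_list) ''s'' ''t''"
    by (auto simp add: adjacent_def F2_list_def ends_of_def less_Suc_eq numeral_eq_Suc doubleton_eq_iff)
  show "set (pf F2_list lam_f2 ''t'' 5 0 [] ''s'') \<subseteq> {[''s'',''u'',''v'',''t''], [''s'',''u'',''w'',''w2'',''t''], [''s'',''u'',''w'',''w2'',''v'',''t''], [''s'',''w'',''w2'',''v'',''t'']}"
    by (simp add: F2_list_def lam_f2_def upt_rec numeral_eq_Suc)
  show "\<forall>a\<in>{[''s'',''u'',''v'',''t''], [''s'',''u'',''w'',''w2'',''t''], [''s'',''u'',''w'',''w2'',''v'',''t''], [''s'',''w'',''w2'',''v'',''t'']}. \<forall>b\<in>{[''s'',''u'',''v'',''t''], [''s'',''u'',''w'',''w2'',''t''], [''s'',''u'',''w'',''w2'',''v'',''t''], [''s'',''w'',''w2'',''v'',''t'']}. \<not> set a \<inter> set b \<subseteq> {''s'',''t''}" by simp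
  show "F12_vertices - {''s'',''t''} \<noteq> {}" by (simp add: F12_vertices_def)
  show "\<forall>v\<in>F12_vertices-{''s'',''t''}. \<exists>vs es. temporal_path F12_vertices {0..<length F2_list} (ends_of F2_list) lam_f2 ''s'' ''t'' vs es \<and> v \<notin> set vs"
  proof
    fix v assume "v \<in> F12_vertices-{''s'',''t''}"
    hence "v = ''u'' \<or> v = ''v'' \<or> v = ''w'' \<or> v = ''w2''" by (auto simp: F12_vertices_def)
    moreover
{ assume "v = ''u''" hence "\<exists>vs es. temporal_path F12_vertices {0..<length F2_list} (ends_of F2_list) lam_f2 ''s'' ''t'' vs es \<and> v \<notin> set vs" using f2_tp3 by fastforce }
    moreover { assume "v = ''v''" hence "\<exists>vs es. temporal_path F12_vertices {0..<length F2_list} (ends_of F2_list) lam_f2 ''s'' ''t'' vs es \<and> v \<notin> set vs" using f2_tp1 by fastforce }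
    moreover { assume "v = ''w''" hence "\<exists>vs es. temporal_path F12_vertices {0..<length F2_list} (ends_of F2_list) lam_f2 ''s'' ''t'' vs es \<and> v \<notin> set vs" using f2_tp0 by fastforce }
    moreover { assume "v = ''w2''" hence "\<exists>vs es. temporal_path F12_vertices {0..<length F2_list} (ends_of F2_list) lam_f2 ''s'' ''t'' vs es \<and> v \<notin> set vs" using f2_tp0 by fastforce }
    ultimately show "\<exists>vs es. temporal_path F12_vertices {0..<length F2_list} (ends_of F2_list) lam_f2 ''s'' ''t'' vs es \<and> v \<notin> set vs" by blast
  qed
qed

definition lam_f3 :: "nat \<Rightarrow> nat" where "lam_f3 e = [1, 1, 2, 2, 1, 2, 1] ! e"

lemma f3_tp0: "temporal_path F3_vertices {0..<length F3_list} (ends_of F3_list) lam_f3 ''s'' ''t'' [''s'',''u'',''v'',''t''] [0,1,2]"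
  unfolding temporal_path_def by (simp add: F3_vertices_def F3_list_def ends_of_def lam_f3_def less_Suc_eq insert_commute)

lemma f3_tp1: "temporal_path F3_vertices {0..<length F3_list} (ends_of F3_list) lam_f3 ''s'' ''t'' [''s'',''u'',''x'',''t''] [0,4,6]"
  unfolding temporal_path_def by (simp add: F3_vertices_def F3_list_def ends_of_def lam_f3_def less_Suc_eq insert_commute)

lemma f3_tp2: "temporal_path F3_vertices {0..<length F3_list} (ends_of F3_list) lam_f3 ''s'' ''t'' [''s'',''u'',''x'',''v'',''t''] [0,4,5,2]"
  unfolding temporal_path_def by (simp add: F3_vertices_def F3_list_def ends_of_def lam_f3_def less_Suc_eq insert_commute)

lemma f3_tp3: "temporal_path F3_vertices {0..<length F3_list} (ends_of F3_list) lam_f3 ''s'' ''t'' [''s'',''x'',''v'',''t''] [3,5,2]"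
  unfolding temporal_path_def by (simp add: F3_vertices_def F3_list_def ends_of_def lam_f3_def less_Suc_eq insert_commute)

lemma f3_nm: "\<not> mengerian F3_vertices {0..<length F3_list} (ends_of F3_list)"
proof (rule not_meng_generic[where n=5 and lam=lam_f3 and s="''s''" and t="''t''" and Q="{[''s'',''u'',''v'',''t''], [''s'',''u'',''x'',''t''], [''s'',''u'',''x'',''v'',''t''], [''s'',''x'',''v'',''t'']}"])
  show "finite F3_vertices" by (simp add: F3_vertices_def)
  show "card F3_vertices \<le> Suc 5" by (simp add: F3_vertices_def)
  show "\<forall>e\<in>{0..<length F3_list}. 0 < lam_f3 e"
    by (auto simp add: F3_list_def lam_f3_def less_Suc_eq numeral_eq_Suc)
  show "''s'' \<in> F3_vertices" "''t'' \<in> F3_vertices" "''s'' \<noteq> ''t''" by (simp_all add: F3_vertices_def)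
  show "\<not> adjacent {0..<length F3_list} (ends_of F3_list) ''s'' ''t''"
    by (auto simp add: adjacent_def F3_list_def ends_of_def less_Suc_eq numeral_eq_Suc doubleton_eq_iff)
  show "set (pf F3_list lam_f3 ''t'' 5 0 [] ''s'') \<subseteq> {[''s'',''u'',''v'',''t''], [''s'',''u'',''x'',''t''], [''s'',''u'',''x'',''v'',''t''], [''s'',''x'',''v'',''t'']}"
    by (simp add: F3_list_def lam_f3_def upt_rec numeral_eq_Suc)
  show "\<forall>a\<in>{[''s'',''u'',''v'',''t''], [''s'',''u'',''x'',''t''], [''s'',''u'',''x'',''v'',''t''], [''s'',''x'',''v'',''t'']}. \<forall>b\<in>{[''s'',''u'',''v'',''t''], [''s'',''u'',''x'',''t''], [''s'',''u'',''x'',''v'',''t''], [''s'',''x'',''v'',''t'']}. \<not> set a \<inter> set b \<subseteq> {''s'',''t''}" by simp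
  show "F3_vertices - {''s'',''t''} \<noteq> {}" by (simp add: F3_vertices_def)
  show "\<forall>v\<in>F3_vertices-{''s'',''t''}. \<exists>vs es. temporal_path F3_vertices {0..<length F3_list} (ends_of F3_list) lam_f3 ''s'' ''t'' vs es \<and> v \<notin> set vs"
  proof
    fix v assume "v \<in> F3_vertices-{''s'',''t''}"
    hence "v = ''u'' \<or> v = ''v'' \<or> v = ''x''" by (auto simp: F3_vertices_def)
    moreover
{ assume "v = ''u''" hence "\<exists>vs es. temporal_path F3_vertices {0..<length F3_list} (ends_of F3_list) lam_f3 ''s'' ''t'' vs es \<and> v \<notin> set vs" using f3_tp3 by fastforce }
    moreover { assume "v = ''v''" hence "\<exists>vs es. temporal_path F3_vertices {0..<length F3_list} (ends_of F3_list) lam_f3 ''s'' ''t'' vs es \<and> v \<notin> set vs" using f3_tp1 by fastforce }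
    moreover { assume "v = ''x''" hence "\<exists>vs es. temporal_path F3_vertices {0..<length F3_list} (ends_of F3_list) lam_f3 ''s'' ''t'' vs es \<and> v \<notin> set vs" using f3_tp0 by fastforce }
    ultimately show "\<exists>vs es. temporal_path F3_vertices {0..<length F3_list} (ends_of F3_list) lam_f3 ''s'' ''t'' vs es \<and> v \<notin> set vs" by blast
  qed
qed

theorem lemma1:
  shows "\<not> mengerian F12_vertices {0..<length F1_list} (ends_of F1_list) \<and>
         \<not> mengerian F12_vertices {0..<length F2_list} (ends_of F2_list) \<and>
         \<not> mengerian F3_vertices {0..<length F3_list} (ends_of F3_list)"
  using f1_nm f2_nm f3_nm by blast

end
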